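(* Let $K\ge2$ and let $p,q\in\mathbb{R}^K$ satisfy $\sum_k p_k=\sum_k q_k=1$ (so that $p,q\in s_\alpha^{-1}(\Delta_{K-1})$ for all $\alpha$ sufficiently close to $1$). Then $\frac{2\alpha}{(1-\alpha)^2K}D_{\mathrm{SKL},\alpha}(p\|q)\to\|p-q\|^2$ as $\alpha\to1$, where $\|\cdot\|$ is the Euclidean norm on $\mathbb{R}^K$.
   Context: $\Delta_{K-1}$ is the probability simplex in $\mathbb{R}^K$. For $\alpha\in\mathbb{R}$, $s_\alpha(v)=(1-\alpha)v+\frac{\alpha}{K}$ componentwise, and $s_\alpha^{-1}(\Delta_{K-1})=\{v\in\mathbb{R}^K: s_\alpha(v)\in\Delta_{K-1}\}$. The smoothed KL divergence is $D_{\mathrm{SKL},\alpha}(p\|q)=\sum_{k=1}^K s_\alpha(p_k)\ln\frac{s_\alpha(p_k)}{s_\alpha(q_k)}$ for $p,q\in s_\alpha^{-1}(\Delta_{K-1})$. *)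

theory Defs
  imports "HOL-Analysis.Analysis"
begin

definition smooth :: "real \<Rightarrow> real ^ 'k \<Rightarrow> real ^ 'k" where
  "smooth \<alpha> v = (\<chi> k. (1 - \<alpha>) * v $ k + \<alpha> / real CARD('k))"

definition DSKL :: "real \<Rightarrow> real ^ 'k \<Rightarrow> real ^ 'k \<Rightarrow> real" where
  "DSKL \<alpha> p q = (\<Sum>k\<in>UNIV. smooth \<alpha> p $ k * ln (smooth \<alpha> p $ k / smooth \<alpha> q $ k))"

end

theory Submission
  imports Defs "HOL-Real_Asymp.Real_Asymp"
begin

definition HH :: "real \<Rightarrow> real" where
  "HH x = (if x = 0 then -1/2 else (ln (1 + x) - x) / x\<^sup>2)"

lemma HH_cont: "isCont HH 0"
proof -
  have "((\<lambda>x::real. (ln (1 + x) - x) / x\<^sup>2) \<longlongrightarrow> -1/2) (at 0)"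
    by real_asymp
  moreover have "eventually (\<lambda>x. (ln (1 + x) - x) / x\<^sup>2 = HH x) (at (0::real))"
    by (simp add: eventually_at_filter HH_def)
  ultimately have "(HH \<longlongrightarrow> -1/2) (at 0)" by (rule Lim_transform_eventually)
  then show ?thesis by (simp add: continuous_at HH_def)
qed

lemma ln_HH: "ln (1 + x) = x + x\<^sup>2 * HH x"
  by (cases "x = 0") (simp_all add: HH_def field_simps)

lemma alg_id:
  fixes K e A B u v :: real
  assumes "L = X - Y + X\<^sup>2 * u - Y\<^sup>2 * v" "X = e * K * A" "Y = e * K * B" "K > 0"
  shows "(1 + X) / K * L = e * (A - B) + e\<^sup>2 * K * (A * (A - B) + (1 + X) * (A\<^sup>2 * u - B\<^sup>2 * v))"
  using assms(4) unfolding assms(1-3) by (simp add: field_simps power2_eq_square)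

theorem theorem2:
  fixes p q :: "real ^ 'k"
  assumes "CARD('k) \<ge> 2"
    and "(\<Sum>k\<in>UNIV. p $ k) = 1"
    and "(\<Sum>k\<in>UNIV. q $ k) = 1"
  shows "((\<lambda>\<alpha>. 2 * \<alpha> / ((1 - \<alpha>)\<^sup>2 * real CARD('k)) * DSKL \<alpha> p q)
           \<longlongrightarrow> (norm (p - q))\<^sup>2) (at 1)"
proof -
  define K where "K = real CARD('k)"
  have K: "K > 0" using assms(1) by (simp add: K_def)
  define a where "a k = p $ k - 1 / K" for k
  define b where "b k = q $ k - 1 / K" for k
  define x where "x \<alpha> k = (1 - \<alpha>) * K * a k" for \<alpha> k
  define y where "y \<alpha> k = (1 - \<alpha>) * K * b k" for \<alpha> k
  define G where "G \<alpha> = 2 * \<alpha> * (\<Sum>k\<in>UNIV. a k * (a k - b k)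
      + (1 + x \<alpha> k) * ((a k)\<^sup>2 * HH (x \<alpha> k) - (b k)\<^sup>2 * HH (y \<alpha> k)))" for \<alpha>
  have sp: "smooth \<alpha> p $ k = (1 + x \<alpha> k) / K" for \<alpha> k
    using K by (simp add: smooth_def x_def a_def K_def field_simps)
  have sq: "smooth \<alpha> q $ k = (1 + y \<alpha> k) / K" for \<alpha> k
    using K by (simp add: smooth_def y_def b_def K_def field_simps)
  have sumab: "(\<Sum>k\<in>UNIV. a k - b k) = 0"
    using assms(2,3) by (simp add: a_def b_def sum_subtractf)
  have xlim: "((\<lambda>\<alpha>. x \<alpha> k) \<longlongrightarrow> 0) (at 1)" for k
    unfolding x_def by (auto intro!: tendsto_eq_intros)
  have ylim: "((\<lambda>\<alpha>. y \<alpha> k) \<longlongrightarrow> 0) (at 1)" for k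
    unfolding y_def by (auto intro!: tendsto_eq_intros)
  have evx: "eventually (\<lambda>\<alpha>. \<forall>k. 1 + x \<alpha> k > 0 \<and> 1 + y \<alpha> k > 0) (at 1)"
  proof (rule eventually_all_finite)
    fix k
    have "eventually (\<lambda>\<alpha>. -1/2 < x \<alpha> k) (at 1)"
      using order_tendstoD(1)[OF xlim[of k]] by simp
    moreover have "eventually (\<lambda>\<alpha>. -1/2 < y \<alpha> k) (at 1)"
      using order_tendstoD(1)[OF ylim[of k]] by simp
    ultimately show "eventually (\<lambda>\<alpha>. 1 + x \<alpha> k > 0 \<and> 1 + y \<alpha> k > 0) (at 1)"
      by eventually_elim auto
  qed
  have ne1: "eventually (\<lambda>\<alpha>. \<alpha> \<noteq> (1::real)) (at 1)"
    by (simp add: eventually_at_filter)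
  have eq: "eventually (\<lambda>\<alpha>. G \<alpha> = 2 * \<alpha> / ((1 - \<alpha>)\<^sup>2 * real CARD('k)) * DSKL \<alpha> p q) (at 1)"
    using evx ne1
  proof eventually_elim
    case (elim \<alpha>)
    have ne: "1 - \<alpha> \<noteq> 0" using elim by simp
    have trm: "smooth \<alpha> p $ k * ln (smooth \<alpha> p $ k / smooth \<alpha> q $ k)
        = (1 - \<alpha>) * (a k - b k) + (1 - \<alpha>)\<^sup>2 * K * (a k * (a k - b k)
      + (1 + x \<alpha> k) * ((a k)\<^sup>2 * HH (x \<alpha> k) - (b k)\<^sup>2 * HH (y \<alpha> k)))" for k
    proof -
      have px: "1 + x \<alpha> k > 0" "1 + y \<alpha> k > 0" using elim by auto
      have "ln (smooth \<alpha> p $ k / smooth \<alpha> q $ k) = ln (1 + x \<alpha> k) - ln (1 + y \<alpha> k)"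
        using px K by (simp add: sp sq ln_div)
      also have "\<dots> = x \<alpha> k - y \<alpha> k + (x \<alpha> k)\<^sup>2 * HH (x \<alpha> k) - (y \<alpha> k)\<^sup>2 * HH (y \<alpha> k)"
        by (simp add: ln_HH)
      finally have L: "ln (smooth \<alpha> p $ k / smooth \<alpha> q $ k) = x \<alpha> k - y \<alpha> k + (x \<alpha> k)\<^sup>2 * HH (x \<alpha> k) - (y \<alpha> k)\<^sup>2 * HH (y \<alpha> k)" .
      show ?thesis using alg_id[OF L x_def y_def K] by (simp only: sp)
    qed
    have "DSKL \<alpha> p q = (\<Sum>k\<in>UNIV. (1 - \<alpha>) * (a k - b k)) + (1 - \<alpha>)\<^sup>2 * K * (\<Sum>k\<in>UNIV. a k * (a k - b k)
      + (1 + x \<alpha> k) * ((a k)\<^sup>2 * HH (x \<alpha> k) - (b k)\<^sup>2 * HH (y \<alpha> k)))"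
      unfolding DSKL_def trm by (simp add: sum.distrib sum_distrib_left[symmetric])
    also have "(\<Sum>k\<in>UNIV. (1 - \<alpha>) * (a k - b k)) = 0"
      by (simp add: sum_distrib_left[symmetric] sumab)
    finally show ?case using ne K by (simp add: G_def K_def field_simps)
  qed
  have lim: "(G \<longlongrightarrow> 2 * 1 * (\<Sum>k\<in>UNIV. a k * (a k - b k)
      + (1 + 0) * ((a k)\<^sup>2 * HH 0 - (b k)\<^sup>2 * HH 0))) (at 1)"
    unfolding G_def
    by (intro tendsto_intros xlim ylim isCont_tendsto_compose[OF HH_cont])
  have val: "2 * 1 * (\<Sum>k\<in>UNIV. a k * (a k - b k)
      + (1 + 0) * ((a k)\<^sup>2 * HH 0 - (b k)\<^sup>2 * HH 0)) = (norm (p - q))\<^sup>2"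
  proof -
    have "(norm (p - q))\<^sup>2 = (\<Sum>k\<in>UNIV. (a k - b k)\<^sup>2)"
      unfolding power2_norm_eq_inner by (simp add: inner_vec_def a_def b_def power2_eq_square)
    also have "\<dots> = 2 * (\<Sum>k\<in>UNIV. a k * (a k - b k) + ((a k)\<^sup>2 * (-1/2) - (b k)\<^sup>2 * (-1/2)))"
      unfolding sum_distrib_left by (rule sum.cong) (auto simp: algebra_simps power2_eq_square)
    finally show ?thesis by (simp add: HH_def)
  qed
  show ?thesis using Lim_transform_eventually[OF lim[unfolded val] eq] .
qed

end
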